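(* Let $V$ be a real vector space, $C$ a convex cone in $V$ and $Y$ a decomposably $C$-antichain-convex subset of $V$. (1) $\mathcal{O}(C,\operatorname{co}(Y))\subseteq\mathcal{O}(C,Y)$. (2) If $C$ is pointed, then $\mathcal{O}(C,Y)=\mathcal{O}(C,\operatorname{co}(Y))$.
   Context: A cone in $V$ is a subset $C$ with $\lambda C\subseteq C$ for all $\lambda>0$ (possibly empty, need not contain $0$); it is pointed iff $C\cap(-C)\subseteq\{0\}$. $S\subseteq V$ is $C$-antichain-convex iff for all $x,y\in S$ and $\lambda\in[0,1]$ with $y-x\notin C\cup(-C)$ one has $\lambda x+(1-\lambda)y\in S$; $S$ is decomposably $C$-antichain-convex iff $S=S_1+\dots+S_n$ (Minkowski sum) for finitely many $C$-antichain-convex $S_i\subseteq V$. For $Z\subseteq V$, $y\in Z$ is a $C$-Pareto optimum of $Z$ iff $(Z\setminus\{y\})\cap(y+C)=\emptyset$; $\mathcal{O}(C,Z)$ is the set of $C$-Pareto optima of $Z$. $\operatorname{co}$ denotes convex hull. *)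

theory Defs
  imports "HOL-Analysis.Analysis" "HOL-Library.Set_Algebras"
begin

definition is_cone :: "'a::real_vector set \<Rightarrow> bool" where
  "is_cone C \<longleftrightarrow> (\<forall>l::real. l > 0 \<longrightarrow> (\<forall>x\<in>C. l *\<^sub>R x \<in> C))"

definition pointed_cone :: "'a::real_vector set \<Rightarrow> bool" where
  "pointed_cone C \<longleftrightarrow> C \<inter> uminus ` C \<subseteq> {0}"

definition antichain_convex :: "'a::real_vector set \<Rightarrow> 'a set \<Rightarrow> bool" where
  "antichain_convex C S \<longleftrightarrow>
     (\<forall>x\<in>S. \<forall>y\<in>S. \<forall>l::real. 0 \<le> l \<and> l \<le> 1 \<and> y - x \<notin> C \<union> uminus ` C
        \<longrightarrow> l *\<^sub>R x + (1 - l) *\<^sub>R y \<in> S)"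

definition decomp_antichain_convex :: "'a::real_vector set \<Rightarrow> 'a set \<Rightarrow> bool" where
  "decomp_antichain_convex C S \<longleftrightarrow>
     (\<exists>n::nat. \<exists>Si :: nat \<Rightarrow> 'a set. (\<forall>i<n. antichain_convex C (Si i)) \<and> S = (\<Sum>i<n. Si i))"

definition pareto_optima :: "'a::real_vector set \<Rightarrow> 'a set \<Rightarrow> 'a set" where
  "pareto_optima C Z = {y \<in> Z. (Z - {y}) \<inter> (\<lambda>c. y + c) ` C = {}}"

end

theory Submission
  imports Defs
begin

lemma c0_add:
  assumes "is_cone C" "convex C" "a \<in> C \<or> a = 0" "b \<in> C \<or> b = 0"
  shows "a + b \<in> C \<or> a + b = 0"
proof (cases "a \<in> C \<and> b \<in> C")
  case True
  then have "(1/2::real) *\<^sub>R a + (1/2::real) *\<^sub>R b \<in> C"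
    using assms(2) unfolding convex_def by auto
  then have "(2::real) *\<^sub>R ((1/2::real) *\<^sub>R a + (1/2::real) *\<^sub>R b) \<in> C"
    using assms(1) unfolding is_cone_def by auto
  then show ?thesis by (simp add: scaleR_add_right)
next
  case False
  then show ?thesis using assms(3,4) by auto
qed

lemma c0_scale:
  assumes "is_cone C" "(l::real) \<ge> 0" "a \<in> C \<or> a = 0"
  shows "l *\<^sub>R a \<in> C \<or> l *\<^sub>R a = 0"
  using assms unfolding is_cone_def
  by (metis less_eq_real_def scaleR_eq_0_iff)

lemma single_max:
  assumes cone: "is_cone C" and cvx: "convex C" and ac: "antichain_convex C S"
    and p: "p \<in> convex hull S"
  shows "\<exists>M\<in>S. M - p \<in> C \<or> M - p = 0"
proof -
  let ?H = "{p. \<exists>M\<in>S. M - p \<in> C \<or> M - p = 0}"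
  have "S \<subseteq> ?H" by auto
  moreover have "convex ?H"
  proof (rule convexI)
    fix p1 p2 and u v :: real
    assume "p1 \<in> ?H" "p2 \<in> ?H" and uv: "0 \<le> u" "0 \<le> v" "u + v = 1"
    then obtain M1 M2 where M1: "M1 \<in> S" "M1 - p1 \<in> C \<or> M1 - p1 = 0"
      and M2: "M2 \<in> S" "M2 - p2 \<in> C \<or> M2 - p2 = 0" by auto
    define q where "q = u *\<^sub>R M1 + v *\<^sub>R M2"
    have d1: "u *\<^sub>R (M1 - p1) \<in> C \<or> u *\<^sub>R (M1 - p1) = 0"
      using c0_scale[OF cone uv(1) M1(2)] .
    have d2: "v *\<^sub>R (M2 - p2) \<in> C \<or> v *\<^sub>R (M2 - p2) = 0"
      using c0_scale[OF cone uv(2) M2(2)] .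
    have qp: "q - (u *\<^sub>R p1 + v *\<^sub>R p2) \<in> C \<or> q - (u *\<^sub>R p1 + v *\<^sub>R p2) = 0"
    proof -
      have "q - (u *\<^sub>R p1 + v *\<^sub>R p2) = u *\<^sub>R (M1 - p1) + v *\<^sub>R (M2 - p2)"
        unfolding q_def by (simp add: algebra_simps)
      then show ?thesis using c0_add[OF cone cvx d1 d2] by simp
    qed
    show "u *\<^sub>R p1 + v *\<^sub>R p2 \<in> ?H"
    proof (cases "M2 - M1 \<in> C \<union> uminus ` C")
      case False
      have "u *\<^sub>R M1 + (1 - u) *\<^sub>R M2 \<in> S"
        using ac M1(1) M2(1) False uv unfolding antichain_convex_def by auto
      moreover have "v = 1 - u" using uv by simp
      ultimately have "q \<in> S" unfolding q_def by simp
      then show ?thesis using qp by blast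
    next
      case True
      then show ?thesis
      proof
        assume h: "M2 - M1 \<in> C"
        have "u *\<^sub>R M2 + v *\<^sub>R M2 = (u + v) *\<^sub>R M2" by (rule scaleR_add_left[symmetric])
        then have "M2 = u *\<^sub>R M2 + v *\<^sub>R M2" using uv(3) by simp
        then have "M2 - q = u *\<^sub>R (M2 - M1)"
          unfolding q_def by (simp add: algebra_simps)
        moreover have "u *\<^sub>R (M2 - M1) \<in> C \<or> u *\<^sub>R (M2 - M1) = 0" using c0_scale[OF cone uv(1)] h by blast
        ultimately have a: "M2 - q \<in> C \<or> M2 - q = 0" by simp
        have e: "M2 - (u *\<^sub>R p1 + v *\<^sub>R p2) = (M2 - q) + (q - (u *\<^sub>R p1 + v *\<^sub>R p2))" by simp
        have "M2 - (u *\<^sub>R p1 + v *\<^sub>R p2) \<in> C \<or> M2 - (u *\<^sub>R p1 + v *\<^sub>R p2) = 0"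
          unfolding e by (rule c0_add[OF cone cvx a qp])
        then show ?thesis using M2(1) by blast
      next
        assume "M2 - M1 \<in> uminus ` C"
        then obtain c where c: "c \<in> C" "M2 - M1 = - c" by blast
        have "M1 - M2 = - (M2 - M1)" by (rule minus_diff_eq[symmetric])
        also have "... = c" using c(2) by simp
        finally have h: "M1 - M2 \<in> C" using c(1) by simp
        have "u *\<^sub>R M1 + v *\<^sub>R M1 = (u + v) *\<^sub>R M1" by (rule scaleR_add_left[symmetric])
        then have "M1 = u *\<^sub>R M1 + v *\<^sub>R M1" using uv(3) by simp
        then have "M1 - q = v *\<^sub>R (M1 - M2)"
          unfolding q_def by (simp add: algebra_simps)
        moreover have "v *\<^sub>R (M1 - M2) \<in> C \<or> v *\<^sub>R (M1 - M2) = 0" using c0_scale[OF cone uv(2)] h by blast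
        ultimately have a: "M1 - q \<in> C \<or> M1 - q = 0" by simp
        have e: "M1 - (u *\<^sub>R p1 + v *\<^sub>R p2) = (M1 - q) + (q - (u *\<^sub>R p1 + v *\<^sub>R p2))" by simp
        have "M1 - (u *\<^sub>R p1 + v *\<^sub>R p2) \<in> C \<or> M1 - (u *\<^sub>R p1 + v *\<^sub>R p2) = 0"
          unfolding e by (rule c0_add[OF cone cvx a qp])
        then show ?thesis using M1(1) by blast
      qed
    qed
  qed
  ultimately have "convex hull S \<subseteq> ?H" by (rule hull_minimal)
  then show ?thesis using p by auto
qed

lemma sum_max:
  fixes n :: nat
  assumes cone: "is_cone C" and cvx: "convex C"
  shows "(\<forall>i<n. antichain_convex C (Si i)) \<Longrightarrow> p \<in> convex hull (\<Sum>i<n. Si i)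
    \<Longrightarrow> \<exists>M\<in>(\<Sum>i<n. Si i). M - p \<in> C \<or> M - p = 0"
proof (induction n arbitrary: p)
  case 0
  then have "p = 0" by simp
  then show ?case by simp
next
  case (Suc n)
  have "p \<in> convex hull ((\<Sum>i<n. Si i) + Si n)" using Suc.prems(2) by simp
  then have "p \<in> convex hull (\<Sum>i<n. Si i) + convex hull (Si n)"
    by (simp add: convex_hull_set_plus)
  then obtain a b where ab: "a \<in> convex hull (\<Sum>i<n. Si i)" "b \<in> convex hull (Si n)" "p = a + b"
    by (auto elim: set_plus_elim)
  obtain Ma where Ma: "Ma \<in> (\<Sum>i<n. Si i)" "Ma - a \<in> C \<or> Ma - a = 0"
    using Suc.IH[OF _ ab(1)] Suc.prems(1) by auto
  obtain Mb where Mb: "Mb \<in> Si n" "Mb - b \<in> C \<or> Mb - b = 0"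
    using single_max[OF cone cvx _ ab(2)] Suc.prems(1) by auto
  have "Ma + Mb \<in> (\<Sum>i<n. Si i) + Si n" by (rule set_plus_intro[OF Ma(1) Mb(1)])
  moreover have "(\<Sum>i<Suc n. Si i) = (\<Sum>i<n. Si i) + Si n" by simp
  ultimately have M: "Ma + Mb \<in> (\<Sum>i<Suc n. Si i)" by simp
  have e: "(Ma + Mb) - p = (Ma - a) + (Mb - b)" using ab(3) by simp
  have "(Ma + Mb) - p \<in> C \<or> (Ma + Mb) - p = 0"
    unfolding e by (rule c0_add[OF cone cvx Ma(2) Mb(2)])
  then show ?case using M by blast
qed

theorem theorem5:
  fixes C Y :: "'a::real_vector set"
  assumes "is_cone C" and "convex C" and "decomp_antichain_convex C Y"
  shows "pareto_optima C (convex hull Y) \<subseteq> pareto_optima C Y \<and>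
         (pointed_cone C \<longrightarrow> pareto_optima C Y = pareto_optima C (convex hull Y))"
proof -
  obtain n :: nat and Si where Si: "\<forall>i<n. antichain_convex C (Si i)" "Y = (\<Sum>i<n. Si i)"
    using assms(3) unfolding decomp_antichain_convex_def by blast
  have mx: "\<exists>M\<in>Y. M - p \<in> C \<or> M - p = 0" if "p \<in> convex hull Y" for p
  proof -
    have "p \<in> convex hull (\<Sum>i<n. Si i)" using that Si(2) by simp
    from sum_max[OF assms(1,2) Si(1) this] show ?thesis unfolding Si(2)[symmetric] .
  qed
  have YH: "Y \<subseteq> convex hull Y" by (rule hull_subset)
  have P1: "pareto_optima C (convex hull Y) \<subseteq> pareto_optima C Y"
  proof
    fix y assume y: "y \<in> pareto_optima C (convex hull Y)"
    then have yH: "y \<in> convex hull Y" and opt: "(convex hull Y - {y}) \<inter> (\<lambda>c. y + c) ` C = {}"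
      unfolding pareto_optima_def by simp_all
    obtain M where M: "M \<in> Y" "M - y \<in> C \<or> M - y = 0" using mx[OF yH] by blast
    have "M = y"
    proof (rule ccontr)
      assume "M \<noteq> y"
      then have "M - y \<in> C" using M(2) by (metis right_minus_eq)
      then have "y + (M - y) \<in> (\<lambda>c. y + c) ` C" by (rule imageI)
        then have "M \<in> (\<lambda>c. y + c) ` C" by simp
      then show False using opt M(1) YH \<open>M \<noteq> y\<close> by blast
    qed
    then have "y \<in> Y" using M by simp
    moreover have "(Y - {y}) \<inter> (\<lambda>c. y + c) ` C = {}" using opt YH by blast
    ultimately show "y \<in> pareto_optima C Y" unfolding pareto_optima_def by blast
  qed
  have P2: "pareto_optima C Y \<subseteq> pareto_optima C (convex hull Y)" if pc: "pointed_cone C"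
  proof
    fix y assume y: "y \<in> pareto_optima C Y"
    then have yY: "y \<in> Y" and opt: "(Y - {y}) \<inter> (\<lambda>c. y + c) ` C = {}"
      unfolding pareto_optima_def by simp_all
    have "(convex hull Y - {y}) \<inter> (\<lambda>c. y + c) ` C = {}"
    proof (rule ccontr)
      assume "\<not> ?thesis"
      then obtain x where x: "x \<in> convex hull Y" "x \<noteq> y" "x \<in> (\<lambda>c. y + c) ` C" by blast
      then obtain c where c0: "c \<in> C" "x = y + c" by blast
      have c: "c \<in> C" "y + c \<in> convex hull Y" "y + c \<noteq> y" using x c0 by simp_all
      obtain M where M: "M \<in> Y" "M - (y + c) \<in> C \<or> M - (y + c) = 0" using mx[OF c(2)] by blast
      have cc: "c \<in> C \<or> c = 0" using c by blast
      have "M - y = (M - (y + c)) + c" by simp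
      then have My: "M - y \<in> C \<or> M - y = 0" using c0_add[OF assms(1,2) M(2) cc] by simp
      show False
      proof (cases "M = y")
        case True
        then have "- c \<in> C \<or> - c = 0" using M(2) by simp
        moreover have "c \<noteq> 0" using c(3) by simp
        ultimately have "- c \<in> C" by (metis neg_equal_0_iff_equal)
        then have "- (- c) \<in> uminus ` C" by (rule imageI)
        then have "c \<in> C \<inter> uminus ` C" using c(1) by simp
        then show False using pc \<open>c \<noteq> 0\<close> unfolding pointed_cone_def by blast
      next
        case False
        then have "M - y \<in> C" using My by (metis right_minus_eq)
        then have "y + (M - y) \<in> (\<lambda>c. y + c) ` C" by (rule imageI)
        then have "M \<in> (\<lambda>c. y + c) ` C" by simp
        then show False using opt M(1) False by blast
      qed
    qed
    then show "y \<in> pareto_optima C (convex hull Y)"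
      using yY YH unfolding pareto_optima_def by blast
  qed
  show ?thesis using P1 P2 by blast
qed

end
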